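(* Let $s_y\ge 0$ and $t\ge 1$ be integers, $Y=[0,s_y]$, $a=4s_y+3$, and $I_1=[0,t]\times Y$, $T=[0,(t),at^2-t]\times\{0\}$, $S=[at^2,(t+1),(a+1)t^2-1]\times Y$, $I_2=[2at^2,2at^2+t]\times Y$, $I_3=[(3a+1)t^2,(3a+1)t^2+t]\times Y$, and $A=I_1\cup I_2\cup I_3\cup T\cup S$. Then $|A|=(8s_y+7)t+(3s_y+1)$ and $A+A\supseteq[0,(16s_y+14)t^2-1]\times[0,s_y]$.
   Context: For integers $a\le b$, $[a,b]$ denotes $\{a,\dots,b\}$. For integers $a\le b$ and $t\ge1$ with $t\mid b-a$, $[a,(t),b]=\{a,a+t,a+2t,\dots,b\}$. $A+A=\{(x+x',y+y'):(x,y),(x',y')\in A\}$ (summands may coincide). *)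

theory Defs
  imports Main
begin

text \<open>Arithmetic progression [a,(t),b] = {a, a+t, ..., b} (assuming t >= 1 and t divides b - a).\<close>
definition step_interval :: "int \<Rightarrow> int \<Rightarrow> int \<Rightarrow> int set" where
  "step_interval a t b = {x. a \<le> x \<and> x \<le> b \<and> t dvd (x - a)}"

definition sumset :: "(int \<times> int) set \<Rightarrow> (int \<times> int) set" where
  "sumset A = {(x + x', y + y') | x y x' y'. (x, y) \<in> A \<and> (x', y') \<in> A}"

end

theory Submission
  imports Defs
begin

lemma sumsetI: "(x1,y1) \<in> A \<Longrightarrow> (x2,y2) \<in> A \<Longrightarrow> (x1+x2, y1+y2) \<in> sumset A"
  unfolding sumset_def by blast

lemma decomp1:
  fixes N m d n :: int
  assumes "N \<ge> 1" "m \<ge> 1" "d \<ge> m - 1" "0 \<le> n" "n \<le> (N-1)*m + d"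
  shows "\<exists>k r. 0\<le>k \<and> k\<le>N-1 \<and> 0\<le>r \<and> r\<le>d \<and> n = k*m + r"
proof (cases "n div m \<le> N - 1")
  case True
  have "n = (n div m)*m + n mod m" by simp
  moreover have "0 \<le> n mod m" "n mod m \<le> d"
  proof -
    have "n mod m < m" using assms by simp
    thus "n mod m \<le> d" using assms(3) by linarith
    show "0 \<le> n mod m" using assms by simp
  qed
  moreover have "0 \<le> n div m" using assms by (simp add: pos_imp_zdiv_nonneg_iff)
  ultimately have "0 \<le> n div m \<and> n div m \<le> N-1 \<and> 0 \<le> n mod m \<and> n mod m \<le> d \<and> n = (n div m)*m + n mod m"
    using True assms by auto
  then show ?thesis by blast
next
  case False
  have e: "n = (n div m)*m + n mod m" by simp
  have "0 \<le> n mod m" using assms by auto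
  have "N * m \<le> (n div m) * m" using False assms by (intro mult_right_mono) auto
  hence "n \<ge> N*m" using e \<open>0 \<le> n mod m\<close> by linarith
  hence "n - (N-1)*m \<ge> 0" using assms by (simp add: algebra_simps)
  then have "0 \<le> N-1 \<and> N-1 \<le> N-1 \<and> 0 \<le> n - (N-1)*m \<and> n - (N-1)*m \<le> d \<and> n = (N-1)*m + (n - (N-1)*m)"
    using assms by auto
  then show ?thesis by blast
qed

lemma decomp3:
  fixes N t n :: int
  assumes "t \<ge> 1" "(t-1)*t \<le> n" "n \<le> N*t - 1"
  shows "\<exists>k j. 0\<le>k \<and> k\<le>N-1 \<and> 0\<le>j \<and> j\<le>t-1 \<and> n = k*t + j*(t+1)"
proof -
  define q where "q = n div t"
  define j where "j = n mod t"
  have e: "n = q*t + j" unfolding q_def j_def by simp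
  have j0: "0 \<le> j" "j < t" unfolding j_def using assms by auto
  have "q*t < N*t" using e j0 assms by linarith
  hence "q < N" using assms by (simp add: mult_less_cancel_right)
  have "(t-1)*t < (q+1)*t" using e j0 assms by (simp add: algebra_simps)
  hence "t-1 < q+1" using assms by (simp add: mult_less_cancel_right)
  have "0 \<le> q - j \<and> q - j \<le> N-1 \<and> 0 \<le> j \<and> j \<le> t-1 \<and> n = (q - j)*t + j*(t+1)"
    using \<open>q < N\<close> \<open>t-1 < q+1\<close> j0 e by (auto simp: algebra_simps)
  then show ?thesis by blast
qed

lemma disj_strip:
  fixes X Z :: "(int \<times> int) set"
  assumes "\<And>p. p \<in> X \<Longrightarrow> fst p \<le> b" "\<And>p. p \<in> Z \<Longrightarrow> c \<le> fst p" "b < c"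
  shows "X \<inter> Z = {}"
  using assms by force

theorem mainTheorem13:
  fixes s\<^sub>y t :: int
  assumes "s\<^sub>y \<ge> 0" and "t \<ge> 1"
  defines "Y \<equiv> {0..s\<^sub>y}"
    and "a \<equiv> 4 * s\<^sub>y + 3"
  defines "I1 \<equiv> {0..t} \<times> Y"
    and "T \<equiv> step_interval 0 t (a * t^2 - t) \<times> {0}"
    and "S \<equiv> step_interval (a * t^2) (t + 1) ((a + 1) * t^2 - 1) \<times> Y"
    and "I2 \<equiv> {2 * a * t^2 .. 2 * a * t^2 + t} \<times> Y"
    and "I3 \<equiv> {(3 * a + 1) * t^2 .. (3 * a + 1) * t^2 + t} \<times> Y"
  defines "A \<equiv> I1 \<union> I2 \<union> I3 \<union> T \<union> S"
  shows "int (card A) = (8 * s\<^sub>y + 7) * t + (3 * s\<^sub>y + 1)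
         \<and> {0 .. (16 * s\<^sub>y + 14) * t^2 - 1} \<times> {0..s\<^sub>y} \<subseteq> sumset A"
proof -
  define u where "u = t^2"
  define P where "P = a * u"
  have t1: "t \<ge> 1" by fact
  have a3: "a \<ge> 3" using assms unfolding a_def by simp
  have ut: "u \<ge> t" unfolding u_def power2_eq_square using t1 by (simp add: mult_le_cancel_right1)
  have P3: "P \<ge> 3*u" unfolding P_def using a3 ut t1 by (intro mult_right_mono) auto
  have Pat: "a*t^2 = P" "(a+1)*t^2 = P + u" "2*a*t^2 = 2*P" "(3*a+1)*t^2 = 3*P+u"
    "(16 * s\<^sub>y + 14) * t^2 = 4*P + 2*u"
    unfolding P_def u_def a_def by (auto simp: algebra_simps)
  have Tset: "step_interval 0 t (a * t^2 - t) = (\<lambda>k. k*t) ` {0..a*t-1}"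
  proof (rule set_eqI, rule iffI)
    fix x assume "x \<in> step_interval 0 t (a * t^2 - t)"
    hence x: "0 \<le> x" "x \<le> a*t^2 - t" "t dvd x" unfolding step_interval_def by auto
    then obtain k where k: "x = t*k" by (auto elim: dvdE)
    have "0 \<le> k" using x(1) k t1 by (simp add: zero_le_mult_iff)
    have "t*k \<le> t*(a*t-1)" using x(2) k by (simp add: algebra_simps power2_eq_square)
    hence "k \<le> a*t-1" using t1 by simp
    then show "x \<in> (\<lambda>k. k*t) ` {0..a*t-1}" using k \<open>0 \<le> k\<close> by (intro image_eqI[of _ _ k]) (auto simp: mult.commute)
  next
    fix x assume "x \<in> (\<lambda>k. k*t) ` {0..a*t-1}"
    then obtain k where k0: "x = k*t" "k \<in> {0..a*t-1}" by (rule imageE)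
    hence k: "x = k*t" "0 \<le> k" "k \<le> a*t-1" by auto
    have "k*t \<le> (a*t-1)*t" using k t1 by (intro mult_right_mono) auto
    then show "x \<in> step_interval 0 t (a * t^2 - t)"
      unfolding step_interval_def using k t1 by (auto simp: algebra_simps power2_eq_square)
  qed
  have Sset: "step_interval (a * t^2) (t + 1) ((a + 1) * t^2 - 1) = (\<lambda>j. a*t^2 + j*(t+1)) ` {0..t-1}"
  proof (rule set_eqI, rule iffI)
    fix x assume "x \<in> step_interval (a * t^2) (t + 1) ((a + 1) * t^2 - 1)"
    hence x: "a*t^2 \<le> x" "x \<le> (a+1)*t^2 - 1" "(t+1) dvd (x - a*t^2)" unfolding step_interval_def by auto
    then obtain k where k: "x - a*t^2 = (t+1)*k" by (auto elim: dvdE)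
    have "0 \<le> (t+1)*k" using x(1) k by linarith
    hence "0 \<le> k" using t1 by (simp add: zero_le_mult_iff)
    have "(t+1)*k \<le> (t+1)*(t-1)" using x(2) k by (simp add: algebra_simps power2_eq_square)
    hence "k \<le> t-1" using t1 by simp
    then show "x \<in> (\<lambda>j. a*t^2 + j*(t+1)) ` {0..t-1}" using k \<open>0 \<le> k\<close>
      by (intro image_eqI[of _ _ k]) (auto simp: algebra_simps)
  next
    fix x assume "x \<in> (\<lambda>j. a*t^2 + j*(t+1)) ` {0..t-1}"
    then obtain k where k0: "x = a*t^2 + k*(t+1)" "k \<in> {0..t-1}" by (rule imageE)
    hence k: "x = a*t^2 + k*(t+1)" "0 \<le> k" "k \<le> t-1" by auto
    have "k*(t+1) \<le> (t-1)*(t+1)" using k t1 by (intro mult_right_mono) auto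
    moreover have "(t+1) dvd (x - a*t^2)" using k(1) by simp
    ultimately show "x \<in> step_interval (a * t^2) (t + 1) ((a + 1) * t^2 - 1)"
      unfolding step_interval_def using k t1 by (auto simp: algebra_simps power2_eq_square)
  qed
  have SsetP: "step_interval (a * t^2) (t + 1) ((a + 1) * t^2 - 1) = (\<lambda>j. P + j*(t+1)) ` {0..t-1}"
    using Sset Pat(1) by simp
  have memT: "(k*t, 0) \<in> A" if "0 \<le> k" "k \<le> a*t-1" for k
    using that unfolding A_def T_def Tset by auto
  have memS: "(P + j*(t+1), y) \<in> A" if "0 \<le> j" "j \<le> t-1" "y \<in> Y" for j y
    using that unfolding A_def S_def SsetP by auto
  have memI1: "(r, y) \<in> A" if "0 \<le> r" "r \<le> t" "y \<in> Y" for r y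
    using that unfolding A_def I1_def by auto
  have memI2: "(2*P + r, y) \<in> A" if "0 \<le> r" "r \<le> t" "y \<in> Y" for r y
    using that unfolding A_def I2_def Pat by auto
  have memI3: "(3*P + u + r, y) \<in> A" if "0 \<le> r" "r \<le> t" "y \<in> Y" for r y
    using that unfolding A_def I3_def Pat by auto
  have Y0: "0 \<in> Y" unfolding Y_def using assms by simp
  have Pt: "(a*t - 1)*t + t = P" unfolding P_def u_def by (simp add: algebra_simps power2_eq_square)
  have ut2: "(t-1)*(t+1) + t = u + t - 1" unfolding u_def by (simp add: algebra_simps power2_eq_square)
  have ut3: "(t-1)*t \<le> u" unfolding u_def using t1 by (simp add: algebra_simps power2_eq_square)
  have at1: "a*t \<ge> 1" using a3 t1 by (simp add: order_trans[OF _ mult_mono[of 1 a 1 t]])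
  have covT: "(c + n, y) \<in> sumset A" if "0 \<le> n" "n \<le> P" "\<And>r. 0 \<le> r \<Longrightarrow> r \<le> t \<Longrightarrow> (c + r, y) \<in> A" for c n y
  proof -
    note hyp = that
    have nb: "n \<le> (a*t-1)*t + t" using hyp(2) Pt by simp
    have "t \<ge> t - 1" by simp
    obtain k r where kr: "0\<le>k" "k\<le>a*t-1" "0\<le>r" "r\<le>t" "n = k*t + r"
      using decomp1[OF at1 t1 \<open>t \<ge> t - 1\<close> hyp(1) nb] by blast
    have "(k*t + (c + r), 0 + y) \<in> sumset A" using memT[OF kr(1,2)] hyp(3)[OF kr(3,4)] by (rule sumsetI)
    thus ?thesis using kr by (simp add: algebra_simps)
  qed
  have covS: "(P + c + n, y) \<in> sumset A" if "0 \<le> n" "n \<le> u + t - 1" "\<And>r. 0 \<le> r \<Longrightarrow> r \<le> t \<Longrightarrow> (c + r, y) \<in> A" for c n y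
  proof -
    note hyp = that
    have nb: "n \<le> (t-1)*(t+1) + t" using hyp(2) ut2 by simp
    have "t \<ge> (t+1) - 1" "t+1 \<ge> 1" using t1 by simp_all
    obtain k r where kr: "0\<le>k" "k\<le>t-1" "0\<le>r" "r\<le>t" "n = k*(t+1) + r"
      using decomp1[OF t1 \<open>t+1 \<ge> 1\<close> \<open>t \<ge> (t+1) - 1\<close> hyp(1) nb] by blast
    have "((P + k*(t+1)) + (c + r), 0 + y) \<in> sumset A" using memS[OF kr(1,2) Y0] hyp(3)[OF kr(3,4)] by (rule sumsetI)
    thus ?thesis using kr by (simp add: algebra_simps)
  qed
  have covTS: "(P + n, y) \<in> sumset A" if "(t-1)*t \<le> n" "n \<le> P - 1" "y \<in> Y" for n y
  proof -
    note hyp = that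
    have nb: "n \<le> (a*t)*t - 1" using hyp(2) Pt by (simp add: algebra_simps)
    obtain k j where kj: "0\<le>k" "k\<le>a*t-1" "0\<le>j" "j\<le>t-1" "n = k*t + j*(t+1)"
      using decomp3[OF t1 hyp(1) nb] by blast
    have "(k*t + (P + j*(t+1)), 0 + y) \<in> sumset A" using memT[OF kj(1,2)] memS[OF kj(3,4) hyp(3)] by (rule sumsetI)
    thus ?thesis using kj by (simp add: algebra_simps)
  qed
  have part2: "{0 .. (16 * s\<^sub>y + 14) * t^2 - 1} \<times> {0..s\<^sub>y} \<subseteq> sumset A"
  proof (rule subsetI, clarify)
    fix x y assume x: "x \<in> {0 .. (16 * s\<^sub>y + 14) * t^2 - 1}" and y: "y \<in> {0..s\<^sub>y}"
    have yY: "y \<in> Y" using y Y_def by simp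
    have xb: "0 \<le> x" "x \<le> 4*P + 2*u - 1" using x Pat by auto
    consider "x \<le> P" | "P \<le> x \<and> x \<le> P + u + t - 1" | "P + u \<le> x \<and> x \<le> 2*P - 1"
      | "2*P \<le> x \<and> x \<le> 3*P" | "3*P \<le> x \<and> x \<le> 3*P + u + t - 1"
      | "3*P + u \<le> x \<and> x \<le> 4*P + u" | "4*P + u \<le> x" using P3 ut t1 by linarith
    then show "(x, y) \<in> sumset A"
    proof cases
      case 1 thus ?thesis using covT[of x 0 y] xb memI1 yY by auto
    next
      case 2 thus ?thesis using covS[of "x - P" 0 y] memI1 yY by auto
    next
      case 3 thus ?thesis using covTS[of "x - P" y] yY ut3 by auto
    next
      case 4 thus ?thesis using covT[of "x - 2*P" "2*P" y] memI2 yY by auto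
    next
      case 5 thus ?thesis using covS[of "x - 3*P" "2*P" y] memI2 yY by (auto simp: algebra_simps)
    next
      case 6 thus ?thesis using covT[of "x - (3*P+u)" "3*P+u" y] memI3 yY by (auto simp: algebra_simps)
    next
      case 7 thus ?thesis using covS[of "x - (4*P+u)" "3*P+u" y] memI3 yY xb ut t1 by (auto simp: algebra_simps)
    qed
  qed

  define T' where "T' = ((\<lambda>k. k*t) ` {2..a*t-1}) \<times> {0::int}"
  define S' where "S' = ((\<lambda>j. P + j*(t+1)) ` {0..t-1}) \<times> Y"
  have SS: "S = S'" unfolding S_def S'_def SsetP ..
  have TT: "T = ((\<lambda>k. k*t) ` {0..a*t-1}) \<times> {0}" unfolding T_def Tset ..
  have T1: "T \<subseteq> I1 \<union> T'"
  proof
    fix p assume "p \<in> T"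
    then obtain k where k0: "p = (k*t, 0)" "k \<in> {0..a*t-1}" unfolding TT by blast
    hence k: "p = (k*t, 0)" "0 \<le> k" "k \<le> a*t-1" by auto
    show "p \<in> I1 \<union> T'"
    proof (cases "k \<le> 1")
      case True
      hence "k = 0 \<or> k = 1" using k by auto
      thus ?thesis using k Y0 t1 unfolding I1_def by auto
    next
      case False thus ?thesis using k unfolding T'_def by auto
    qed
  qed
  have T2: "T' \<subseteq> T" unfolding TT T'_def by auto
  have Aeq: "A = I1 \<union> (T' \<union> (S' \<union> (I2 \<union> I3)))"
    unfolding A_def SS[symmetric] using T1 T2 by blast
  have fI1: "fst p \<le> t" if "p \<in> I1" for p using that unfolding I1_def by auto
  have fT': "2*t \<le> fst p \<and> fst p \<le> P - t" if hp: "p \<in> T'" for p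
  proof -
    obtain k where k0: "fst p = k*t" "k \<in> {2..a*t-1}" using hp unfolding T'_def by force
    hence k: "fst p = k*t" "2 \<le> k" "k \<le> a*t-1" by auto
    have "2*t \<le> k*t" using k t1 by (intro mult_right_mono) auto
    moreover have "k*t \<le> (a*t-1)*t" using k t1 by (intro mult_right_mono) auto
    ultimately show ?thesis using k Pt by linarith
  qed
  have fS: "P \<le> fst p \<and> fst p \<le> P + u - 1" if hp: "p \<in> S'" for p
  proof -
    obtain k where k0: "fst p = P + k*(t+1)" "k \<in> {0..t-1}" using hp unfolding S'_def by force
    hence k: "fst p = P + k*(t+1)" "0 \<le> k" "k \<le> t-1" by auto
    have "0 \<le> k*(t+1)" using k t1 by simp
    moreover have "k*(t+1) \<le> (t-1)*(t+1)" using k t1 by (intro mult_right_mono) auto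
    ultimately show ?thesis using k ut2 by linarith
  qed
  have fI2: "2*P \<le> fst p \<and> fst p \<le> 2*P + t" if "p \<in> I2" for p using that unfolding I2_def Pat by auto
  have fI3: "3*P + u \<le> fst p" if "p \<in> I3" for p using that unfolding I3_def Pat by auto
  have d1: "I1 \<inter> (T' \<union> (S' \<union> (I2 \<union> I3))) = {}"
    apply (rule disj_strip[of _ t _ "2*t"])
    using fI1 apply blast
    using fT' fS fI2 fI3 P3 ut t1 apply fastforce
    using t1 by simp
  have d2: "T' \<inter> (S' \<union> (I2 \<union> I3)) = {}"
    apply (rule disj_strip[of _ "P - t" _ P])
    using fT' apply blast
    using fS fI2 fI3 P3 ut t1 apply fastforce
    using t1 by simp
  have d3: "S' \<inter> (I2 \<union> I3) = {}"
    apply (rule disj_strip[of _ "P + u - 1" _ "2*P"])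
    using fS apply blast
    using fI2 fI3 P3 ut t1 apply fastforce
    using P3 ut t1 by simp
  have d4: "I2 \<inter> I3 = {}"
    apply (rule disj_strip[of _ "2*P + t" _ "3*P + u"])
    using fI2 apply blast
    using fI3 apply blast
    using P3 ut t1 by simp
  have fin: "finite I1" "finite T'" "finite S'" "finite I2" "finite I3"
    unfolding I1_def T'_def S'_def I2_def I3_def Y_def by auto
  have cY: "int (card Y) = s\<^sub>y + 1" unfolding Y_def using assms by simp
  have cI1: "int (card I1) = (t+1)*(s\<^sub>y+1)" unfolding I1_def card_cartesian_product
    using cY t1 by simp
  have cI2: "int (card I2) = (t+1)*(s\<^sub>y+1)" unfolding I2_def card_cartesian_product
    using cY t1 by simp
  have cI3: "int (card I3) = (t+1)*(s\<^sub>y+1)" unfolding I3_def card_cartesian_product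
    using cY t1 by simp
  have injT: "inj_on (\<lambda>k::int. k*t) {2..a*t-1}" using t1 by (auto simp: inj_on_def)
  have injS: "inj_on (\<lambda>j::int. P + j*(t+1)) {0..t-1}" using t1 by (auto simp: inj_on_def)
  have cT': "int (card T') = a*t - 2" unfolding T'_def card_cartesian_product
    using card_image[OF injT] at1 a3 t1
    by (simp add: order_trans[OF _ mult_mono[of 3 a 1 t]])
  have cS': "int (card S') = t*(s\<^sub>y+1)" unfolding S'_def card_cartesian_product
    using card_image[OF injS] cY t1 by simp
  have "card A = card I1 + (card T' + (card S' + (card I2 + card I3)))"
    unfolding Aeq using fin d1 d2 d3 d4 by (simp add: card_Un_disjoint)
  hence "int (card A) = (t+1)*(s\<^sub>y+1) + (a*t - 2 + (t*(s\<^sub>y+1) + ((t+1)*(s\<^sub>y+1) + (t+1)*(s\<^sub>y+1))))"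
    using cI1 cI2 cI3 cT' cS' by simp
  hence part1: "int (card A) = (8 * s\<^sub>y + 7) * t + (3 * s\<^sub>y + 1)"
    unfolding a_def by (simp add: algebra_simps)
  show ?thesis using part1 part2 by blast
qed

end
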